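(* Let $d\ge1$ and let $P$ be an essential pattern subgroup of $G(d)$. Then $\mathrm{Hdim}(G_P)=\frac{\log_2|P_{d-1}|}{2^{d-1}}$, where $P_{d-1}$ is the level-$(d-1)$ stabilizer of $P$.
   Context: Let $X=\{0,1\}$, $X^*$ the rooted binary tree of finite words, $G=\mathrm{Aut}(X^* )$, $G(d)$ the automorphism group of the finite tree of words of length $\le d$. Sections $g(wv)=g(w)g_w(v)$; $\pi_k$ restriction to words of length $\le k$; $K(n)=\pi_n(K)$; the level-$k$ stabilizer of a group consists of elements fixing all words of length $k$. A subgroup $P\le G(d)$ is an essential pattern group if for every $p\in P$ and $i\in\{0,1\}$ there is $q\in P$ with $\pi_{d-1}(q)=p_i$; $G_P=\{g\in G:\pi_d(g_w)\in P\ \forall w\in X^*\}$. Hausdorff dimension is taken with respect to the profinite metric; for closed $K\le G$, $\mathrm{Hdim}(K)=\liminf_{n\to\infty}\log_2|K(n)|/\log_2|G(n)|$. *)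

theory Defs
  imports "HOL-Library.Liminf_Limsup" "HOL-Library.Extended_Real" Complex_Main
begin

text \<open>Words over the alphabet X = {0,1} are modelled as bool lists.
  An automorphism of the rooted binary tree X^* is a bijection of words
  fixing the root and preserving the parent/child relation.\<close>

definition TreeAut :: "(bool list \<Rightarrow> bool list) set" where
  "TreeAut = {g. bij g \<and> g [] = [] \<and>
     (\<forall>w x. \<exists>y. g (w @ [x]) = g w @ [y])}"

text \<open>G(d): automorphisms of the finite tree of words of length at most d,
  extended by the identity on longer words.\<close>
definition FinAut :: "nat \<Rightarrow> (bool list \<Rightarrow> bool list) set" where
  "FinAut d = {g. bij g \<and> g [] = [] \<and>
     (\<forall>w. d < length w \<longrightarrow> g w = w) \<and>
     (\<forall>w x. length w < d \<longrightarrow> (\<exists>y. g (w @ [x]) = g w @ [y]))}"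

text \<open>Section g_w of g at w: g(wv) = g(w) g_w(v).\<close>
definition gsection :: "(bool list \<Rightarrow> bool list) \<Rightarrow> bool list \<Rightarrow> (bool list \<Rightarrow> bool list)" where
  "gsection g w = (\<lambda>v. drop (length w) (g (w @ v)))"

definition fsec :: "nat \<Rightarrow> (bool list \<Rightarrow> bool list) \<Rightarrow> bool list \<Rightarrow> (bool list \<Rightarrow> bool list)" where
  "fsec d p w = (\<lambda>v. if length v \<le> d - length w then drop (length w) (p (w @ v)) else v)"

definition restr :: "nat \<Rightarrow> (bool list \<Rightarrow> bool list) \<Rightarrow> (bool list \<Rightarrow> bool list)" where
  "restr k g = (\<lambda>v. if length v \<le> k then g v else v)"

definition is_subgroup_FinAut :: "nat \<Rightarrow> (bool list \<Rightarrow> bool list) set \<Rightarrow> bool" where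
  "is_subgroup_FinAut d P \<longleftrightarrow> P \<subseteq> FinAut d \<and> id \<in> P \<and>
     (\<forall>p\<in>P. \<forall>q\<in>P. p \<circ> q \<in> P) \<and> (\<forall>p\<in>P. inv p \<in> P)"

definition essential_pattern :: "nat \<Rightarrow> (bool list \<Rightarrow> bool list) set \<Rightarrow> bool" where
  "essential_pattern d P \<longleftrightarrow> is_subgroup_FinAut d P \<and>
     (\<forall>p\<in>P. \<forall>i::bool. \<exists>q\<in>P. restr (d - 1) q = fsec d p [i])"

definition G_P :: "nat \<Rightarrow> (bool list \<Rightarrow> bool list) set \<Rightarrow> (bool list \<Rightarrow> bool list) set" where
  "G_P d P = {g \<in> TreeAut. \<forall>w. restr d (gsection g w) \<in> P}"

definition level_stab :: "nat \<Rightarrow> (bool list \<Rightarrow> bool list) set \<Rightarrow> (bool list \<Rightarrow> bool list) set" where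
  "level_stab k P = {p \<in> P. \<forall>w. length w = k \<longrightarrow> p w = w}"

text \<open>Hausdorff dimension w.r.t. the profinite metric, via the liminf formula.\<close>
definition Hdim :: "(bool list \<Rightarrow> bool list) set \<Rightarrow> ereal" where
  "Hdim K = liminf (\<lambda>n. ereal (log 2 (real (card (restr n ` K))) / log 2 (real (card (FinAut n)))))"

end

theory Submission
  imports Defs "HOL-Library.FuncSet" "HOL-Real_Asymp.Real_Asymp"
begin


fun act :: "(bool list \<Rightarrow> bool) \<Rightarrow> bool list \<Rightarrow> bool list" where
  "act s [] = []"
| "act s (x#v) = (x \<noteq> s []) # act (\<lambda>u. s (x#u)) v"

fun iact :: "(bool list \<Rightarrow> bool) \<Rightarrow> bool list \<Rightarrow> bool list" where
  "iact s [] = []"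
| "iact s (y#v) = (y \<noteq> s []) # iact (\<lambda>u. s ((y \<noteq> s []) # u)) v"

lemma length_act[simp]: "length (act s v) = length v"
  by (induct v arbitrary: s) auto

lemma length_iact[simp]: "length (iact s v) = length v"
  by (induct v arbitrary: s) auto

lemma act_append: "act s (w @ v) = act s w @ act (\<lambda>u. s (w @ u)) v"
  by (induct w arbitrary: s) auto

lemma act_snoc: "act s (v @ [x]) = act s v @ [x \<noteq> s v]"
  by (simp add: act_append)

lemma act_iact: "act s (iact s v) = v"
  by (induct v arbitrary: s) auto

lemma iact_act: "iact s (act s v) = v"
proof (induct v arbitrary: s)
  case (Cons a v)
  then show ?case by (cases a; cases "s []") simp_all
qed simp

lemma bij_act: "bij (act s)"
  by (rule o_bij[of "iact s"]) (auto simp: fun_eq_iff act_iact iact_act)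

lemma act_TreeAut: "act s \<in> TreeAut"
  unfolding TreeAut_def using bij_act act_snoc by auto

lemma act_cong: "(\<forall>u. length u < length v \<longrightarrow> s u = t u) \<Longrightarrow> act s v = act t v"
  by (induct v rule: rev_induct) (auto simp: act_snoc)

lemma act_agree_iff:
  "(\<forall>v. length v \<le> n \<longrightarrow> act s v = act t v) \<longleftrightarrow> (\<forall>u. length u < n \<longrightarrow> s u = t u)"
proof
  assume H: "\<forall>v. length v \<le> n \<longrightarrow> act s v = act t v"
  show "\<forall>u. length u < n \<longrightarrow> s u = t u"
  proof (intro allI impI)
    fix u :: "bool list" assume "length u < n"
    then have "act s (u @ [False]) = act t (u @ [False])" using H by auto
    then show "s u = t u" by (simp add: act_snoc)
  qed
next
  assume "\<forall>u. length u < n \<longrightarrow> s u = t u"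
  then show "\<forall>v. length v \<le> n \<longrightarrow> act s v = act t v"
    by (auto intro!: act_cong)
qed

definition port :: "(bool list \<Rightarrow> bool list) \<Rightarrow> bool list \<Rightarrow> bool" where
  "port g w = g (w @ [False]) ! length w"

lemma rep:
  assumes g0: "g [] = []" and ch: "\<And>w x. length w < n \<Longrightarrow> \<exists>y. g (w@[x]) = g w @ [y]"
    and inj: "inj g"
  shows "length v \<le> n \<Longrightarrow> g v = act (port g) v"
proof (induct v rule: rev_induct)
  case Nil then show ?case using g0 by simp
next
  case (snoc x v)
  then have lv: "length v < n" by simp
  have IH: "g v = act (port g) v" using snoc by simp
  obtain y0 where y0: "g (v@[False]) = g v @ [y0]" using ch[OF lv] by blast
  obtain y1 where y1: "g (v@[True]) = g v @ [y1]" using ch[OF lv] by blast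
  have p: "port g v = y0" unfolding port_def y0 using IH by (simp add: nth_append)
  have "y0 \<noteq> y1"
  proof
    assume "y0 = y1"
    then have "g (v@[False]) = g (v@[True])" using y0 y1 by simp
    then have "v@[False] = v@[True]" by (rule injD[OF inj])
    then show False by simp
  qed
  then show ?case using p y0 y1 IH by (cases x) (auto simp: act_snoc)
qed

lemma TreeAut_act: "g \<in> TreeAut \<Longrightarrow> g = act (port g)"
proof
  fix v assume g: "g \<in> TreeAut"
  show "g v = act (port g) v"
    by (rule rep[of g "length v"]) (use g in \<open>auto simp: TreeAut_def bij_def\<close>)
qed

lemma TreeAut_eq: "TreeAut = range act"
  using TreeAut_act act_TreeAut by blast

definition F :: "nat \<Rightarrow> (bool list \<Rightarrow> bool) \<Rightarrow> bool list \<Rightarrow> bool list" where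
  "F n s = restr n (act s)"

lemma F_eq_iff: "F n s = F n t \<longleftrightarrow> (\<forall>u. length u < n \<longrightarrow> s u = t u)"
proof -
  have "F n s = F n t \<longleftrightarrow> (\<forall>v. length v \<le> n \<longrightarrow> act s v = act t v)"
    unfolding F_def restr_def fun_eq_iff by auto
  then show ?thesis using act_agree_iff by simp
qed

definition T :: "nat \<Rightarrow> (bool list \<Rightarrow> bool) set" where
  "T n = {t. \<forall>u. n \<le> length u \<longrightarrow> t u = False}"

definition trunc :: "nat \<Rightarrow> (bool list \<Rightarrow> bool) \<Rightarrow> bool list \<Rightarrow> bool" where
  "trunc n s = (\<lambda>u. if length u < n then s u else False)"

lemma trunc_T[simp]: "trunc n s \<in> T n"
  by (simp add: trunc_def T_def)

lemma F_trunc[simp]: "F n (trunc n s) = F n s"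
  by (simp add: F_eq_iff trunc_def)

lemma inj_F: "inj_on (F n) (T n)"
proof (rule inj_onI)
  fix x y assume "x \<in> T n" "y \<in> T n" "F n x = F n y"
  then show "x = y"
  proof (intro ext)
    fix u
    show "x u = y u"
    proof (cases "length u < n")
      case True then show ?thesis using \<open>F n x = F n y\<close> by (simp add: F_eq_iff)
    next
      case False then show ?thesis using \<open>x \<in> T n\<close> \<open>y \<in> T n\<close> by (simp add: T_def)
    qed
  qed
qed

lemma bij_F: "bij (F n s)"
  unfolding bij_def
proof
  show "inj (F n s)"
  proof (rule injI)
    fix x y assume "F n s x = F n s y"
    then have "(if length x \<le> n then act s x else x) = (if length y \<le> n then act s y else y)"
      unfolding F_def restr_def by simp
    then show "x = y"
      by (cases "length x \<le> n"; cases "length y \<le> n") (simp_all, metis iact_act, (metis length_act)+)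
  qed
  show "surj (F n s)"
  proof (rule surjI)
    fix y
    show "F n s (if length y \<le> n then iact s y else y) = y"
      unfolding F_def restr_def by (auto simp: act_iact)
  qed
qed

lemma F_FinAut: "F n s \<in> FinAut n"
  unfolding FinAut_def using bij_F[of n s]
  by (auto simp: F_def restr_def act_snoc)

lemma FinAut_F: "p \<in> FinAut n \<Longrightarrow> p = F n (trunc n (port p))"
proof -
  assume p: "p \<in> FinAut n"
  have "\<And>v. length v \<le> n \<Longrightarrow> p v = act (port p) v"
    by (rule rep[of p n]) (use p in \<open>auto simp: FinAut_def bij_def\<close>)
  moreover have "\<And>v. length v \<le> n \<Longrightarrow> act (port p) v = act (trunc n (port p)) v"
    by (rule act_cong) (auto simp: trunc_def)
  ultimately show ?thesis using p by (auto simp: F_def restr_def FinAut_def fun_eq_iff)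
qed

lemma FinAut_eq: "FinAut n = F n ` T n"
  using FinAut_F F_FinAut trunc_T by blast

definition U :: "nat \<Rightarrow> bool list set" where "U n = {u. length u < n}"

lemma U_Suc: "U (Suc n) = U n \<union> {xs. set xs \<subseteq> UNIV \<and> length xs = n}"
  by (auto simp: U_def)

lemma finite_U: "finite (U n)"
  using finite_lists_length_eq[of "UNIV::bool set"]
  by (induct n) (auto simp: U_Suc, simp add: U_def)

lemma card_U: "card (U n) = 2^n - 1"
proof (induct n)
  case 0 then show ?case by (simp add: U_def)
next
  case (Suc n)
  have "card (U (Suc n)) = card (U n) + card {xs::bool list. set xs \<subseteq> UNIV \<and> length xs = n}"
    unfolding U_Suc by (rule card_Un_disjoint) (use finite_lists_length_eq[of "UNIV::bool set" n] finite_U in \<open>auto simp: U_def\<close>)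
  also have "\<dots> = 2^n - 1 + 2^n" using Suc card_lists_length_eq[of "UNIV::bool set" n] by simp
  finally show ?case by simp
qed

lemma T_eq: "T n = (\<lambda>S u. u \<in> S) ` Pow (U n)"
proof
  show "T n \<subseteq> (\<lambda>S u. u \<in> S) ` Pow (U n)"
  proof
    fix t assume t: "t \<in> T n"
    have "t = (\<lambda>u. u \<in> {u \<in> U n. t u})" using t by (auto simp: T_def U_def fun_eq_iff; metis not_le)
    then show "t \<in> (\<lambda>S u. u \<in> S) ` Pow (U n)" by blast
  qed
  show "(\<lambda>S u. u \<in> S) ` Pow (U n) \<subseteq> T n" by (auto simp: T_def U_def)
qed

lemma inj_mem: "inj_on (\<lambda>S u. u \<in> S) A"
  by (auto simp: inj_on_def fun_eq_iff)

lemma finite_T: "finite (T n)"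
  unfolding T_eq by (simp add: finite_U)

lemma card_T: "card (T n) = 2 ^ (2^n - 1)"
  unfolding T_eq by (simp add: card_image inj_mem card_Pow finite_U card_U)

lemma card_FinAut: "card (FinAut n) = 2 ^ (2^n - 1)"
  unfolding FinAut_eq by (simp add: card_image inj_F card_T)

lemma finite_FinAut: "finite (FinAut n)"
  unfolding FinAut_eq by (simp add: finite_T)




definition shift :: "bool list \<Rightarrow> (bool list \<Rightarrow> bool) \<Rightarrow> bool list \<Rightarrow> bool" where
  "shift w s = (\<lambda>u. s (w @ u))"

lemma gsection_act: "gsection (act s) w = act (shift w s)"
  by (simp add: gsection_def act_append shift_def fun_eq_iff)

lemma trunc_trunc: "m \<le> n \<Longrightarrow> trunc m (trunc n s) = trunc m s"
  by (auto simp: trunc_def fun_eq_iff)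

lemma trunc_shift_trunc:
  "length w + d \<le> n \<Longrightarrow> trunc d (shift w (trunc n s)) = trunc d (shift w s)"
  by (auto simp: trunc_def shift_def fun_eq_iff)

lemma act_zero: "act (\<lambda>_. False) v = v"
  by (induct v) auto

locale EP =
  fixes d :: nat and P :: "(bool list \<Rightarrow> bool list) set"
  assumes d1: "1 \<le> d" and ess: "essential_pattern d P"
begin

lemma sub: "is_subgroup_FinAut d P" using ess by (simp add: essential_pattern_def)

lemma P_FinAut: "P \<subseteq> FinAut d" using sub by (simp add: is_subgroup_FinAut_def)
lemma id_P: "id \<in> P" using sub by (simp add: is_subgroup_FinAut_def)
lemma comp_P: "p \<in> P \<Longrightarrow> q \<in> P \<Longrightarrow> p \<circ> q \<in> P" using sub by (simp add: is_subgroup_FinAut_def)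
lemma inv_P: "p \<in> P \<Longrightarrow> inv p \<in> P" using sub by (simp add: is_subgroup_FinAut_def)

lemma finite_P: "finite P" using P_FinAut finite_FinAut finite_subset by blast

definition Q :: "(bool list \<Rightarrow> bool) set" where
  "Q = {t \<in> T d. F d t \<in> P}"

lemma finite_Q: "finite Q" unfolding Q_def using finite_T by simp

lemma P_rep: "p \<in> P \<Longrightarrow> \<exists>t\<in>Q. p = F d t"
  using FinAut_F P_FinAut unfolding Q_def by (metis (mono_tags, lifting) mem_Collect_eq subsetD trunc_T)

definition V :: "(bool list \<Rightarrow> bool) set" where
  "V = {s. \<forall>w. trunc d (shift w s) \<in> Q}"

lemma G_P_eq: "G_P d P = act ` V"
proof -
  have "\<And>s w. restr d (gsection (act s) w) \<in> P \<longleftrightarrow> trunc d (shift w s) \<in> Q"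
    by (simp add: gsection_act Q_def F_def[symmetric])
  then show ?thesis unfolding G_P_def V_def TreeAut_eq by auto
qed

lemma zero_V: "(\<lambda>_. False) \<in> V"
proof -
  have "F d (\<lambda>_. False) = id" by (auto simp: F_def restr_def act_zero fun_eq_iff)
  moreover have "shift w (\<lambda>_. False) = (\<lambda>_. False)" for w
    by (auto simp: shift_def fun_eq_iff)
  moreover have "trunc d (\<lambda>_. False) = (\<lambda>_. False)"
    by (auto simp: trunc_def fun_eq_iff)
  moreover have "(\<lambda>_. False) \<in> T d" by (simp add: T_def)
  ultimately show ?thesis using id_P by (simp add: V_def Q_def)
qed

lemma card_restr: "card (restr n ` G_P d P) = card (trunc n ` V)"
proof -
  have "restr n ` G_P d P = F n ` (trunc n ` V)"
    unfolding G_P_eq image_image by (simp add: F_def[symmetric])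
  moreover have "inj_on (F n) (trunc n ` V)" using inj_F by (rule inj_on_subset) auto
  ultimately show ?thesis by (simp add: card_image)
qed

lemma ess_Q:
  assumes t: "t \<in> Q"
  shows "\<exists>t'\<in>Q. \<forall>u. length u < d - 1 \<longrightarrow> t' u = t (i # u)"
proof -
  have p: "F d t \<in> P" using t by (simp add: Q_def)
  obtain q where q: "q \<in> P" and qe: "restr (d - 1) q = fsec d (F d t) [i]"
    using ess p unfolding essential_pattern_def by blast
  obtain t' where t': "t' \<in> Q" and qt: "q = F d t'" using P_rep[OF q] by blast
  have "\<forall>v. length v \<le> d - 1 \<longrightarrow> act t' v = act (\<lambda>u. t (i # u)) v"
  proof (intro allI impI)
    fix v :: "bool list" assume v: "length v \<le> d - 1"
    have "restr (d - 1) q v = fsec d (F d t) [i] v" using qe by simp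
    moreover have "Suc (length v) \<le> d" "length v \<le> d" using v d1 by auto
    ultimately show "act t' v = act (\<lambda>u. t (i # u)) v"
      using v by (simp add: restr_def fsec_def qt F_def)
  qed
  then have "\<forall>u. length u < d - 1 \<longrightarrow> t' u = t (i # u)" by (simp only: act_agree_iff)
  then show ?thesis using t' by blast
qed

lemma fix_iff:
  assumes "p \<in> P"
  shows "(\<forall>w. length w = d - 1 \<longrightarrow> p w = w) \<longleftrightarrow> (\<forall>v. length v \<le> d - 1 \<longrightarrow> p v = v)"
proof
  obtain t where pt: "p = F d t" using P_rep assms by blast
  assume H: "\<forall>w. length w = d - 1 \<longrightarrow> p w = w"
  show "\<forall>v. length v \<le> d - 1 \<longrightarrow> p v = v"
  proof (intro allI impI)
    fix v :: "bool list" assume v: "length v \<le> d - 1"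
    define w where "w = v @ replicate (d - 1 - length v) False"
    have "length w = d - 1" using v by (simp add: w_def)
    then have "act t w = w" using H pt d1 by (simp add: F_def restr_def)
    then have "act t v = v" unfolding w_def act_append by simp
    then show "p v = v" using pt v by (simp add: F_def restr_def)
  qed
qed simp

abbreviation "a \<equiv> card (level_stab (d - 1) P)"

lemma coset_card:
  assumes t0: "t0 \<in> Q"
  shows "card {t \<in> Q. \<forall>u. length u < d - 1 \<longrightarrow> t u = t0 u} = a"
proof -
  let ?A = "{t \<in> Q. \<forall>u. length u < d - 1 \<longrightarrow> t u = t0 u}"
  define p0 where "p0 = F d t0"
  have p0: "p0 \<in> P" using t0 by (simp add: Q_def p0_def)
  have bp0: "bij p0" using p0 P_FinAut by (auto simp: FinAut_def)
  let ?B = "{p \<in> P. \<forall>v. length v \<le> d - 1 \<longrightarrow> p v = p0 v}"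
  have agree: "(\<forall>v. length v \<le> d - 1 \<longrightarrow> F d t v = F d t0 v) \<longleftrightarrow> (\<forall>u. length u < d - 1 \<longrightarrow> t u = t0 u)" for t
    using act_agree_iff[of "d-1" t t0] by (auto simp: F_def restr_def)
  have img: "F d ` ?A = ?B"
  proof
    show "F d ` ?A \<subseteq> ?B" using agree by (auto simp: Q_def p0_def)
    show "?B \<subseteq> F d ` ?A"
    proof
      fix p assume p: "p \<in> ?B"
      then obtain t where t: "t \<in> Q" "p = F d t" using P_rep by blast
      then have "t \<in> ?A" using p agree by (auto simp: p0_def)
      then show "p \<in> F d ` ?A" using t by blast
    qed
  qed
  have cA: "card ?A = card ?B"
  proof -
    have "inj_on (F d) ?A" using inj_F by (rule inj_on_subset) (auto simp: Q_def)
    then show ?thesis using img card_image by fastforce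
  qed
  have "bij_betw (\<lambda>p. inv p0 \<circ> p) ?B (level_stab (d - 1) P)"
  proof (rule bij_betw_byWitness[where f' = "\<lambda>q. p0 \<circ> q"])
    have ip: "inv p0 (p0 x) = x" for x using bp0 by (simp add: bij_is_inj)
    have pi: "p0 (inv p0 x) = x" for x using bp0 by (simp add: bij_is_surj surj_f_inv_f)
    show "\<forall>x\<in>?B. p0 \<circ> (inv p0 \<circ> x) = x" using pi by (auto simp: fun_eq_iff)
    show "\<forall>y\<in>level_stab (d - 1) P. inv p0 \<circ> (p0 \<circ> y) = y" using ip by (auto simp: fun_eq_iff)
    show "(\<lambda>p. inv p0 \<circ> p) ` ?B \<subseteq> level_stab (d - 1) P"
    proof
      fix q assume "q \<in> (\<lambda>p. inv p0 \<circ> p) ` ?B"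
      then obtain p where p: "p \<in> ?B" and q: "q = inv p0 \<circ> p" by blast
      have qP: "q \<in> P" using q p comp_P inv_P p0 by auto
      have "\<forall>v. length v \<le> d - 1 \<longrightarrow> q v = v" using p q ip by auto
      then show "q \<in> level_stab (d - 1) P" using fix_iff[OF qP] qP by (simp add: level_stab_def)
    qed
    show "(\<lambda>q. p0 \<circ> q) ` level_stab (d - 1) P \<subseteq> ?B"
    proof
      fix p assume "p \<in> (\<lambda>q. p0 \<circ> q) ` level_stab (d - 1) P"
      then obtain q where q: "q \<in> level_stab (d - 1) P" and p: "p = p0 \<circ> q" by blast
      have qP: "q \<in> P" using q by (simp add: level_stab_def)
      have "\<forall>v. length v \<le> d - 1 \<longrightarrow> q v = v" using fix_iff[OF qP] q by (simp add: level_stab_def)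
      then show "p \<in> ?B" using p comp_P[OF p0 qP] by auto
    qed
  qed
  then have "card ?B = a" by (rule bij_betw_same_card)
  then show ?thesis using cA by simp
qed

end



context EP
begin

definition FV :: "nat \<Rightarrow> (bool list \<Rightarrow> bool) set" where
  "FV n = {t \<in> T n. \<forall>w. length w + d \<le> n \<longrightarrow> trunc d (shift w t) \<in> Q}"

lemma finite_FV: "finite (FV n)"
  using finite_T by (rule finite_subset[rotated]) (auto simp: FV_def)

definition W :: "nat \<Rightarrow> bool list set" where
  "W n = {w. length w = Suc (n - d)}"

definition A :: "(bool list \<Rightarrow> bool) \<Rightarrow> bool list \<Rightarrow> (bool list \<Rightarrow> bool) set" where
  "A t w = {r \<in> Q. \<forall>u. length u < d - 1 \<longrightarrow> r u = t (w @ u)}"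

definition Fib :: "nat \<Rightarrow> (bool list \<Rightarrow> bool) \<Rightarrow> (bool list \<Rightarrow> bool) set" where
  "Fib n t = {t' \<in> FV (Suc n). trunc n t' = t}"

definition gl :: "nat \<Rightarrow> (bool list \<Rightarrow> bool) \<Rightarrow> (bool list \<Rightarrow> bool list \<Rightarrow> bool) \<Rightarrow> bool list \<Rightarrow> bool" where
  "gl n t c = (\<lambda>u. if length u < n then t u
      else if length u = n then c (take (Suc (n - d)) u) (drop (Suc (n - d)) u) else False)"

lemma Q_T: "r \<in> Q \<Longrightarrow> length v \<ge> d \<Longrightarrow> r v = False"
  by (simp add: Q_def T_def)

lemma win:
  assumes n: "d \<le> n" and c: "c \<in> Pi\<^sub>E (W n) (A t)" and w: "w \<in> W n"
  shows "trunc d (shift w (gl n t c)) = c w"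
proof
  fix v :: "bool list"
  have lw: "length w = Suc (n - d)" using w by (simp add: W_def)
  have cw: "c w \<in> A t w" using c w by auto
  show "trunc d (shift w (gl n t c)) v = c w v"
  proof (cases "length v < d - 1")
    case True
    then have "length (w @ v) < n" "length v < d" using lw n d1 by simp_all
    then show ?thesis using True cw by (simp add: trunc_def shift_def gl_def A_def)
  next
    case False
    show ?thesis
    proof (cases "length v < d")
      case True
      then have "length v = d - 1" using False by simp
      then have "length (w @ v) = n" using lw n d1 by simp
      then show ?thesis using True lw by (simp add: trunc_def shift_def gl_def)
    next
      case False
      then show ?thesis using cw Q_T[of "c w" v] by (simp add: trunc_def A_def)
    qed
  qed
qed

lemma gl_in:
  assumes n: "d \<le> n" and t: "t \<in> FV n" and c: "c \<in> Pi\<^sub>E (W n) (A t)"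
  shows "gl n t c \<in> Fib n t"
proof -
  have tT: "t \<in> T n" using t by (simp add: FV_def)
  have "gl n t c \<in> T (Suc n)" by (auto simp: T_def gl_def)
  moreover have "trunc n (gl n t c) = t"
    using tT by (auto simp: trunc_def gl_def T_def fun_eq_iff)
  moreover have "trunc d (shift w (gl n t c)) \<in> Q" if lw: "length w + d \<le> Suc n" for w
  proof (cases "length w + d \<le> n")
    case True
    then have "trunc d (shift w (gl n t c)) = trunc d (shift w t)"
      by (auto simp: trunc_def shift_def gl_def fun_eq_iff)
    then show ?thesis using t True by (simp add: FV_def)
  next
    case False
    then have w: "w \<in> W n" using lw n d1 by (simp add: W_def)
    then have "c w \<in> Q" using c by (auto simp: A_def)
    then show ?thesis using win[OF n c w] by simp
  qed
  ultimately show ?thesis by (simp add: Fib_def FV_def)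
qed

lemma Fib_bij:
  assumes n: "d \<le> n" and t: "t \<in> FV n"
  shows "bij_betw (\<lambda>t'. restrict (\<lambda>w. trunc d (shift w t')) (W n)) (Fib n t) (Pi\<^sub>E (W n) (A t))"
proof (rule bij_betw_byWitness[where f' = "gl n t"])
  show "\<forall>c\<in>Pi\<^sub>E (W n) (A t). restrict (\<lambda>w. trunc d (shift w (gl n t c))) (W n) = c"
  proof
    fix c assume c: "c \<in> Pi\<^sub>E (W n) (A t)"
    show "restrict (\<lambda>w. trunc d (shift w (gl n t c))) (W n) = c"
    proof
      fix w show "restrict (\<lambda>w. trunc d (shift w (gl n t c))) (W n) w = c w"
        using win[OF n c] c by (cases "w \<in> W n") (auto simp: PiE_def extensional_def)
    qed
  qed
  show "gl n t ` Pi\<^sub>E (W n) (A t) \<subseteq> Fib n t" using gl_in[OF n t] by blast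
  show "\<forall>t'\<in>Fib n t. gl n t (restrict (\<lambda>w. trunc d (shift w t')) (W n)) = t'"
  proof
    fix t' assume t': "t' \<in> Fib n t"
    then have tr: "trunc n t' = t" and tT: "t' \<in> T (Suc n)" by (auto simp: Fib_def FV_def)
    show "gl n t (restrict (\<lambda>w. trunc d (shift w t')) (W n)) = t'"
    proof
      fix u :: "bool list"
      show "gl n t (restrict (\<lambda>w. trunc d (shift w t')) (W n)) u = t' u"
      proof (cases "length u < n")
        case True
        have "t u = t' u" using fun_cong[OF tr, of u] True by (simp add: trunc_def)
        then show ?thesis using True by (simp add: gl_def)
      next
        case False
        show ?thesis
        proof (cases "length u = n")
          case True
          have tw: "take (Suc (n - d)) u \<in> W n" using True n d1 by (simp add: W_def)
          have "length (drop (Suc (n - d)) u) < d" using True n d1 by simp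
          then show ?thesis using True tw
            by (simp add: gl_def trunc_def shift_def)
        next
          case False
          then show ?thesis using \<open>\<not> length u < n\<close> tT by (simp add: gl_def T_def)
        qed
      qed
    qed
  qed
  show "(\<lambda>t'. restrict (\<lambda>w. trunc d (shift w t')) (W n)) ` Fib n t \<subseteq> Pi\<^sub>E (W n) (A t)"
  proof
    fix c assume "c \<in> (\<lambda>t'. restrict (\<lambda>w. trunc d (shift w t')) (W n)) ` Fib n t"
    then obtain t' where t': "t' \<in> Fib n t" and c: "c = restrict (\<lambda>w. trunc d (shift w t')) (W n)" by blast
    have tr: "trunc n t' = t" and fv: "t' \<in> FV (Suc n)" using t' by (auto simp: Fib_def)
    have "trunc d (shift w t') \<in> A t w" if w: "w \<in> W n" for w
    proof -
      have lw: "length w + d \<le> Suc n" using w n d1 by (simp add: W_def)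
      have q: "trunc d (shift w t') \<in> Q" using fv lw by (simp add: FV_def)
      have "\<forall>u. length u < d - 1 \<longrightarrow> trunc d (shift w t') u = t (w @ u)"
      proof (intro allI impI)
        fix u :: "bool list" assume "length u < d - 1"
        then have "length u < d" "length (w @ u) < n" using w n d1 by (auto simp: W_def)
        moreover have "t (w @ u) = t' (w @ u)" using fun_cong[OF tr, of "w @ u"] \<open>length (w @ u) < n\<close>
          by (simp add: trunc_def)
        ultimately show "trunc d (shift w t') u = t (w @ u)"
          by (simp add: trunc_def shift_def)
      qed
      then show ?thesis using q by (simp add: A_def)
    qed
    then show "c \<in> Pi\<^sub>E (W n) (A t)" using c by auto
  qed
qed

lemma A_nonempty:
  assumes n: "d \<le> n" and t: "t \<in> FV n" and w: "w \<in> W n"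
  shows "A t w \<noteq> {}"
proof -
  have lw: "length w = Suc (n - d)" using w by (simp add: W_def)
  then obtain w' i where ww: "w = w' @ [i]" by (metis length_Suc_conv_rev)
  have lw': "length w' + d \<le> n" using lw ww n by simp
  have "trunc d (shift w' t) \<in> Q" using t lw' by (simp add: FV_def)
  from ess_Q[OF this, of i] obtain r where r: "r \<in> Q"
    and re: "\<forall>u. length u < d - 1 \<longrightarrow> r u = trunc d (shift w' t) (i # u)" by blast
  have "\<forall>u. length u < d - 1 \<longrightarrow> r u = t (w @ u)"
    using re ww by (auto simp: trunc_def shift_def)
  then show ?thesis using r by (auto simp: A_def)
qed

lemma card_A: "d \<le> n \<Longrightarrow> t \<in> FV n \<Longrightarrow> w \<in> W n \<Longrightarrow> card (A t w) = a"
proof -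
  assume "d \<le> n" "t \<in> FV n" "w \<in> W n"
  then obtain r where r: "r \<in> A t w" using A_nonempty by blast
  then have "A t w = {s \<in> Q. \<forall>u. length u < d - 1 \<longrightarrow> s u = r u}" by (auto simp: A_def)
  then show ?thesis using coset_card r by (simp add: A_def)
qed

lemma card_W: "card (W n) = 2 ^ Suc (n - d)"
  using card_lists_length_eq[of "UNIV :: bool set" "Suc (n - d)"] by (simp add: W_def)

lemma finite_W: "finite (W n)"
  using finite_lists_length_eq[of "UNIV :: bool set" "Suc (n - d)"] by (simp add: W_def)

lemma card_Fib:
  assumes n: "d \<le> n" and t: "t \<in> FV n"
  shows "card (Fib n t) = a ^ (2 ^ Suc (n - d))"
proof -
  have "card (Fib n t) = card (Pi\<^sub>E (W n) (A t))" using Fib_bij[OF n t] by (rule bij_betw_same_card)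
  also have "\<dots> = (\<Prod>w\<in>W n. card (A t w))" by (simp add: card_PiE finite_W)
  also have "\<dots> = (\<Prod>w\<in>W n. a)" using card_A[OF n t] by simp
  also have "\<dots> = a ^ (2 ^ Suc (n - d))" by (simp add: card_W)
  finally show ?thesis .
qed

lemma Fib_nonempty:
  assumes n: "d \<le> n" and t: "t \<in> FV n"
  shows "Fib n t \<noteq> {}"
proof -
  have "Pi\<^sub>E (W n) (A t) \<noteq> {}" using A_nonempty[OF n t] by (simp add: PiE_eq_empty_iff)
  then show ?thesis using Fib_bij[OF n t] by (auto simp: bij_betw_def)
qed

lemma FV_Suc: "FV (Suc n) = (\<Union>t\<in>FV n. Fib n t)"
proof
  show "FV (Suc n) \<subseteq> (\<Union>t\<in>FV n. Fib n t)"
  proof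
    fix t' assume t': "t' \<in> FV (Suc n)"
    have "trunc n t' \<in> FV n"
      using t' by (auto simp: FV_def trunc_shift_trunc)
    then show "t' \<in> (\<Union>t\<in>FV n. Fib n t)" using t' by (auto simp: Fib_def)
  qed
  show "(\<Union>t\<in>FV n. Fib n t) \<subseteq> FV (Suc n)" by (auto simp: Fib_def)
qed

lemma card_FV_Suc:
  assumes n: "d \<le> n"
  shows "card (FV (Suc n)) = card (FV n) * a ^ (2 ^ Suc (n - d))"
proof -
  have "card (FV (Suc n)) = (\<Sum>t\<in>FV n. card (Fib n t))"
    unfolding FV_Suc
  proof (rule card_UN_disjoint)
    show "finite (FV n)" by (rule finite_FV)
    show "\<forall>t\<in>FV n. finite (Fib n t)"
      using finite_FV[of "Suc n"] by (auto simp: Fib_def intro: finite_subset[rotated])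
    show "\<forall>t\<in>FV n. \<forall>t''\<in>FV n. t \<noteq> t'' \<longrightarrow> Fib n t \<inter> Fib n t'' = {}"
      by (auto simp: Fib_def)
  qed
  also have "\<dots> = (\<Sum>t\<in>FV n. a ^ (2 ^ Suc (n - d)))" using card_Fib[OF n] by simp
  finally show ?thesis by simp
qed

lemma card_FV: "card (FV (d + j)) = card (FV d) * a ^ (2 ^ Suc j - 2)"
proof (induct j)
  case 0 then show ?case by simp
next
  case (Suc j)
  have "card (FV (d + Suc j)) = card (FV (d + j)) * a ^ (2 ^ Suc j)"
    using card_FV_Suc[of "d + j"] by simp
  also have "\<dots> = card (FV d) * (a ^ (2 ^ Suc j - 2) * a ^ (2 ^ Suc j))" using Suc by simp
  also have "\<dots> = card (FV d) * a ^ (2 ^ Suc (Suc j) - 2)"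
  proof -
    have "2 ^ Suc j - 2 + 2 ^ Suc j = 2 ^ Suc (Suc j) - (2::nat)"
      using one_le_power[of "2::nat" j] by simp
    then show ?thesis by (simp flip: power_add)
  qed
  finally show ?case .
qed

end



lemma trunc_T_id: "t \<in> T m \<Longrightarrow> trunc m t = t"
  by (auto simp: T_def trunc_def fun_eq_iff)

lemma aux_field: "(x::real) - 1 \<noteq> 0 \<Longrightarrow> D \<noteq> 0 \<Longrightarrow>
  (C + (x / D - 2) * L) / (x - 1) = (C - 2 * L) * (1 / (x - 1)) + (L / D) * (x / (x - 1))"
  by (simp add: divide_simps) (simp add: algebra_simps)

context EP
begin

lemma L_sub: "trunc n ` V \<subseteq> FV n"
  by (auto simp: FV_def V_def trunc_shift_trunc)

lemma ext1: "d \<le> n \<Longrightarrow> t \<in> FV n \<Longrightarrow> \<exists>t'. t' \<in> FV (Suc n) \<and> trunc n t' = t"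
  using Fib_nonempty by (auto simp: Fib_def)

lemma FV_sub:
  assumes n: "d \<le> n" and t: "t \<in> FV n"
  shows "t \<in> trunc n ` V"
proof -
  define seq where "seq = rec_nat t (\<lambda>j s. SOME t'. t' \<in> FV (Suc (n + j)) \<and> trunc (n + j) t' = s)"
  have seq0: "seq 0 = t" by (simp add: seq_def)
  have seqS: "seq (Suc j) = (SOME t'. t' \<in> FV (Suc (n + j)) \<and> trunc (n + j) t' = seq j)" for j
    by (simp add: seq_def)
  have S12: "seq j \<in> FV (n + j) \<and> trunc (n + j) (seq (Suc j)) = seq j" for j
  proof (induct j)
    case 0
    have "\<exists>t'. t' \<in> FV (Suc (n + 0)) \<and> trunc (n + 0) t' = seq 0" using ext1[OF n t] seq0 by simp
    then have "seq (Suc 0) \<in> FV (Suc (n + 0)) \<and> trunc (n + 0) (seq (Suc 0)) = seq 0"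
      unfolding seqS by (rule someI_ex)
    then show ?case using t seq0 by simp
  next
    case (Suc j)
    have s1: "seq (Suc j) \<in> FV (n + Suc j)"
    proof -
      have "\<exists>t'. t' \<in> FV (Suc (n + j)) \<and> trunc (n + j) t' = seq j" using ext1 Suc n by simp
      then have "seq (Suc j) \<in> FV (Suc (n + j)) \<and> trunc (n + j) (seq (Suc j)) = seq j"
        unfolding seqS by (rule someI_ex)
      then show ?thesis by simp
    qed
    have "\<exists>t'. t' \<in> FV (Suc (n + Suc j)) \<and> trunc (n + Suc j) t' = seq (Suc j)" using ext1 s1 n by simp
    then have "seq (Suc (Suc j)) \<in> FV (Suc (n + Suc j)) \<and> trunc (n + Suc j) (seq (Suc (Suc j))) = seq (Suc j)"
      unfolding seqS[of "Suc j"] by (rule someI_ex)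
    then show ?case using s1 by simp
  qed
  have S3: "trunc (n + j) (seq (j + i)) = seq j" for i j
  proof (induct i)
    case 0 then show ?case using S12[of j] trunc_T_id by (simp add: FV_def)
  next
    case (Suc i)
    have "trunc (n + j) (seq (j + Suc i)) = trunc (n + j) (trunc (n + (j + i)) (seq (Suc (j + i))))"
      by (simp add: trunc_trunc)
    also have "\<dots> = seq j" using S12[of "j + i"] Suc by simp
    finally show ?case .
  qed
  define s where "s = (\<lambda>u. seq (Suc (length u)) u)"
  have S4: "trunc (n + j) s = seq j" for j
  proof
    fix u :: "bool list"
    show "trunc (n + j) s u = seq j u"
    proof (cases "length u < n + j")
      case True
      have a1: "seq j u = seq (j + Suc (length u)) u"
        using fun_cong[OF S3[of j "Suc (length u)"], of u] True by (simp add: trunc_def)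
      have a2: "seq (Suc (length u)) u = seq (Suc (length u) + j) u"
        using fun_cong[OF S3[of "Suc (length u)" j], of u] by (simp add: trunc_def)
      show ?thesis using True a1 a2 by (simp add: trunc_def s_def add.commute)
    next
      case False
      then show ?thesis using S12[of j] by (simp add: trunc_def FV_def T_def)
    qed
  qed
  have "s \<in> V"
  proof -
    have "trunc d (shift w s) \<in> Q" for w
    proof -
      have "trunc d (shift w s) = trunc d (shift w (trunc (n + (length w + d)) s))"
        by (simp add: trunc_shift_trunc)
      also have "\<dots> = trunc d (shift w (seq (length w + d)))" by (simp add: S4)
      finally show ?thesis using S12[of "length w + d"] by (simp add: FV_def)
    qed
    then show ?thesis by (simp add: V_def)
  qed
  moreover have "trunc n s = t" using S4[of 0] seq0 by simp
  ultimately show ?thesis by blast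
qed

lemma card_L: "d \<le> n \<Longrightarrow> card (restr n ` G_P d P) = card (FV n)"
  using L_sub FV_sub card_restr by (metis subsetI subset_antisym)

lemma c_pos: "card (FV d) \<ge> 1"
proof -
  have "trunc d (\<lambda>_. False) \<in> FV d" using L_sub zero_V by blast
  then show ?thesis using finite_FV[of d] by (metis One_nat_def Suc_leI card_gt_0_iff empty_iff)
qed

lemma a_pos: "a \<ge> 1"
proof -
  have "id \<in> level_stab (d - 1) P" using id_P by (simp add: level_stab_def)
  moreover have "finite (level_stab (d - 1) P)" using finite_P by (simp add: level_stab_def)
  ultimately show ?thesis by (metis One_nat_def Suc_leI card_gt_0_iff empty_iff)
qed

lemma main: "Hdim (G_P d P) = ereal (log 2 (real a) / 2 ^ (d - 1))"
proof -
  define c where "c = card (FV d)"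
  define L where "L = log 2 (real a)"
  define C where "C = log 2 (real c)"
  define f where "f = (\<lambda>n. log 2 (real (card (restr n ` G_P d P))) / log 2 (real (card (FinAut n))))"
  define h where "h = (\<lambda>n::nat. (C - 2 * L) * (1 / (2^n - 1)) + (L / 2^(d-1)) * (2^n / (2^n - 1)))"
  have cpos: "real c > 0" using c_pos by (simp add: c_def)
  have apos: "real a > 0" using a_pos by simp
  have ev: "\<forall>\<^sub>F n in sequentially. f n = h n"
  proof (rule eventually_sequentiallyI[of d])
    fix n assume n: "d \<le> n"
    define j where "j = n - d"
    have nj: "n = d + j" using n by (simp add: j_def)
    have e1: "real (card (restr n ` G_P d P)) = real c * real a ^ (2 ^ Suc j - 2)"
      using card_L[OF n] card_FV[of j] nj by (simp add: c_def)
    have "log 2 (real (card (restr n ` G_P d P))) = C + real (2 ^ Suc j - 2) * L"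
      unfolding e1 using cpos apos by (simp add: log_mult log_nat_power C_def L_def)
    also have "real (2 ^ Suc j - 2 :: nat) = 2 ^ Suc j - 2"
      using one_le_power[of "2::nat" j] by (simp add: of_nat_diff)
    also have "(2::real) ^ Suc j = 2 ^ n / 2 ^ (d - 1)"
    proof -
      have "n = (d - 1) + Suc j" using nj d1 by simp
      then have "(2::real) ^ n = 2 ^ (d - 1) * 2 ^ Suc j" by (metis power_add)
      then show ?thesis by simp
    qed
    finally have num: "log 2 (real (card (restr n ` G_P d P))) = C + (2 ^ n / 2 ^ (d - 1) - 2) * L" .
    have den: "log 2 (real (card (FinAut n))) = 2 ^ n - 1"
    proof -
      have "log 2 (real (card (FinAut n))) = real (2 ^ n - 1 :: nat)"
        by (simp add: card_FinAut log_nat_power)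
      then show ?thesis using one_le_power[of "2::nat" n] by (simp add: of_nat_diff)
    qed
    have pos: "(2::real) ^ n - 1 > 0" using n d1
      by (metis diff_gt_0_iff_gt le_numeral_extra(4) one_less_power order_less_le_trans power_one_right zero_less_one one_less_numeral_iff semiring_norm(76))
    show "f n = h n" unfolding f_def h_def num den using pos
      by (intro aux_field) simp_all
  qed
  have l1: "(\<lambda>n::nat. 1 / (2^n - 1::real)) \<longlonglongrightarrow> 0" by real_asymp
  have l2: "(\<lambda>n::nat. 2^n / (2^n - 1::real)) \<longlonglongrightarrow> 1" by real_asymp
  have "h \<longlonglongrightarrow> (C - 2 * L) * 0 + (L / 2^(d-1)) * 1"
    unfolding h_def by (intro tendsto_intros l1 l2)
  then have "h \<longlonglongrightarrow> L / 2^(d-1)" by simp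
  then have "f \<longlonglongrightarrow> L / 2^(d-1)" using tendsto_cong[OF ev] by simp
  then have "(\<lambda>n. ereal (f n)) \<longlonglongrightarrow> ereal (L / 2^(d-1))" by (rule tendsto_ereal)
  then have "liminf (\<lambda>n. ereal (f n)) = ereal (L / 2^(d-1))" by (simp add: lim_imp_Liminf)
  then show ?thesis unfolding Hdim_def f_def L_def by simp
qed

end


theorem mainTheorem12:
  fixes d :: nat and P :: "(bool list \<Rightarrow> bool list) set"
  assumes "d \<ge> 1" and "essential_pattern d P"
  shows "Hdim (G_P d P) = ereal (log 2 (real (card (level_stab (d - 1) P))) / 2 ^ (d - 1))"
proof -
  interpret EP d P using assms by (unfold_locales) auto
  show ?thesis by (rule main)
qed

end
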